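(* Let $\{x^k\}\subset\mathbb{R}^n$ be a bounded sequence with $x^k\neq x^{k+1}$ for all $k\in\mathbb{N}$. Suppose: (H1) there is a function $\Psi:\mathbb{R}^n\to[-\infty,\infty]$ such that $\{\Psi(x^k)\}$ is well defined (real), non-negative and converges to $0$; (H2) there is $D>0$ such that for all sufficiently large $k$, $\Psi(x^k)-\Psi(x^{k+1})\ge D\|x^k-x^{k+1}\|^2$; (H3) there are $\eta\in(0,\infty]$, a differentiable concave function $\varphi:[0,\eta)\to\mathbb{R}_+$ with $\varphi(0)=0$ and $\varphi'>0$ on $(0,\eta)$, and constants $C_1,C_2\ge0$ with $C_1+C_2>0$, such that for all sufficiently large $k$, $\Psi(x^k)<\eta$ and $\varphi'(\Psi(x^k))\,\big(C_1\|x^k-x^{k+1}\|+C_2\|x^{k-1}-x^k\|\big)\ge1$. Then for all sufficiently large $k$, $$\tfrac34\|x^k-x^{k+1}\|\le\tfrac14\|x^{k-1}-x^k\|+\frac{\max\{C_1,C_2\}}{D}\big(\varphi(\Psi(x^k))-\varphi(\Psi(x^{k+1}))\big),$$ and $\sum_{k}\|x^k-x^{k+1}\|<\infty$; in particular the sequence $\{x^k\}$ is convergent. *)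

theory Defs
  imports "HOL-Analysis.Analysis"
begin

end

theory Submission
  imports Defs
begin

lemma tangent_concave:
  fixes \<phi> \<phi>' :: "real \<Rightarrow> real" and \<eta> :: ereal
  assumes H3_deriv: "\<forall>t \<in> {t. 0 \<le> t \<and> ereal t < \<eta>}.
                     (\<phi> has_real_derivative \<phi>' t) (at t within {t. 0 \<le> t \<and> ereal t < \<eta>})"
    and H3_concave: "concave_on {t. 0 \<le> t \<and> ereal t < \<eta>} \<phi>"
    and c: "0 < c" "ereal c < \<eta>" and y: "0 \<le> y" "ereal y < \<eta>"
  shows "\<phi> c - \<phi> y \<ge> \<phi>' c * (c - y)"
proof -
  define A where "A = {t. 0 \<le> t \<and> ereal t < \<eta>}"
  have cv: "convex_on A (\<lambda>t. - \<phi> t)" using H3_concave unfolding A_def concave_on_def .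
  have "convex A" using H3_concave unfolding A_def by (rule concave_on_imp_convex)
  hence con: "connected A" by (rule convex_connected)
  have ci: "c \<in> interior A"
  proof (cases \<eta>)
    case (real e)
    have "{0<..<e} \<subseteq> interior A"
      by (rule interior_maximal) (auto simp: A_def real)
    thus ?thesis using c real by auto
  next
    case PInf
    have "{0<..<c+1} \<subseteq> interior A"
      by (rule interior_maximal) (auto simp: A_def PInf)
    thus ?thesis using c by auto
  next
    case MInf
    thus ?thesis using c by auto
  qed
  have d: "((\<lambda>t. - \<phi> t) has_field_derivative - \<phi>' c) (at c within A)"
    using H3_deriv c unfolding A_def by (auto intro!: derivative_eq_intros)
  have "- \<phi> y - - \<phi> c \<ge> - \<phi>' c * (y - c)"
    by (rule convex_on_imp_above_tangent[OF cv con ci _ d]) (use y in \<open>auto simp: A_def\<close>)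
  thus ?thesis by (simp add: algebra_simps)
qed

lemma amgm_step:
  fixes a b v :: real
  assumes "0 \<le> a" "0 \<le> b" "0 \<le> v" "a^2 \<le> (a + b) * v"
  shows "3/4 * a \<le> 1/4 * b + v"
proof -
  have "((a + b) / 4 + v)^2 \<ge> (a + b) * v"
    using sum_squares_ge_zero[of "(a+b)/4 - v" 0] by (simp add: power2_eq_square algebra_simps)
  hence "a^2 \<le> ((a+b)/4 + v)^2" using assms by linarith
  hence "a \<le> (a+b)/4 + v" using assms by (simp add: power2_le_iff_abs_le abs_le_iff)
  thus ?thesis by (simp add: field_simps)
qed

theorem theorem2:
  fixes x :: "nat \<Rightarrow> real ^ 'n"
    and \<Psi> :: "real ^ 'n \<Rightarrow> ereal"
    and D C1 C2 :: real
    and \<eta> :: ereal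
    and \<phi> \<phi>' :: "real \<Rightarrow> real"
  assumes bdd: "bounded (range x)"
    and distinct: "\<forall>k. x k \<noteq> x (Suc k)"
    and H1_fin: "\<forall>k. \<bar>\<Psi> (x k)\<bar> \<noteq> \<infinity>"
    and H1_nonneg: "\<forall>k. \<Psi> (x k) \<ge> 0"
    and H1_lim: "(\<lambda>k. \<Psi> (x k)) \<longlonglongrightarrow> 0"
    and H2_D: "D > 0"
    and H2: "\<forall>\<^sub>F k in sequentially.
               \<Psi> (x k) - \<Psi> (x (Suc k)) \<ge> ereal (D * (norm (x k - x (Suc k)))\<^sup>2)"
    and H3_eta: "\<eta> > 0"
    and H3_deriv: "\<forall>t \<in> {t. 0 \<le> t \<and> ereal t < \<eta>}.
                     (\<phi> has_real_derivative \<phi>' t) (at t within {t. 0 \<le> t \<and> ereal t < \<eta>})"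
    and H3_concave: "concave_on {t. 0 \<le> t \<and> ereal t < \<eta>} \<phi>"
    and H3_nonneg: "\<forall>t \<in> {t. 0 \<le> t \<and> ereal t < \<eta>}. \<phi> t \<ge> 0"
    and H3_zero: "\<phi> 0 = 0"
    and H3_pos: "\<forall>t. 0 < t \<and> ereal t < \<eta> \<longrightarrow> \<phi>' t > 0"
    and H3_C: "C1 \<ge> 0" "C2 \<ge> 0" "C1 + C2 > 0"
    and H3: "\<forall>\<^sub>F k in sequentially. \<Psi> (x k) < \<eta> \<and>
               \<phi>' (real_of_ereal (\<Psi> (x k))) *
                 (C1 * norm (x k - x (Suc k)) + C2 * norm (x (k - 1) - x k)) \<ge> 1"
  shows "(\<forall>\<^sub>F k in sequentially.
            3/4 * norm (x k - x (Suc k)) \<le> 1/4 * norm (x (k - 1) - x k)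
              + max C1 C2 / D * (\<phi> (real_of_ereal (\<Psi> (x k))) - \<phi> (real_of_ereal (\<Psi> (x (Suc k))))))
         \<and> summable (\<lambda>k. norm (x k - x (Suc k)))
         \<and> convergent x"
proof -
  define p where "p k = real_of_ereal (\<Psi> (x k))" for k
  define a where "a k = norm (x k - x (Suc k))" for k
  define M where "M = max C1 C2"
  have M: "M > 0" using H3_C unfolding M_def by linarith
  have Pp: "\<Psi> (x k) = ereal (p k)" for k
    using H1_fin unfolding p_def by (metis ereal_real')
  have p0: "p k \<ge> 0" for k using H1_nonneg Pp[of k] by (metis ereal_less_eq(5))
  have a0: "a k > 0" for k using distinct unfolding a_def by auto
  obtain N0 where N0: "\<And>k. k \<ge> N0 \<Longrightarrow>
      \<Psi> (x k) - \<Psi> (x (Suc k)) \<ge> ereal (D * (norm (x k - x (Suc k)))\<^sup>2) \<and>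
      \<Psi> (x k) < \<eta> \<and> \<phi>' (real_of_ereal (\<Psi> (x k))) *
                 (C1 * norm (x k - x (Suc k)) + C2 * norm (x (k - 1) - x k)) \<ge> 1"
    using eventually_conj[OF H2 H3] unfolding eventually_sequentially by blast
  define N where "N = Suc N0"
  have key: "p k - p (Suc k) \<ge> D * (a k)^2 \<and> ereal (p k) < \<eta> \<and> ereal (p (Suc k)) < \<eta>
             \<and> \<phi>' (p k) * (C1 * a k + C2 * a (k - 1)) \<ge> 1" if "k \<ge> N" for k
  proof -
    have h: "\<Psi> (x k) - \<Psi> (x (Suc k)) \<ge> ereal (D * (a k)\<^sup>2)" "\<Psi> (x k) < \<eta>"
      "\<Psi> (x (Suc k)) < \<eta>"
      "\<phi>' (p k) * (C1 * a k + C2 * a (k - 1)) \<ge> 1"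
      using N0[of k] N0[of "Suc k"] that unfolding a_def p_def N_def
      by (auto simp: norm_minus_commute Suc_pred')
    thus ?thesis unfolding Pp by simp
  qed
  have ineq: "3/4 * a k \<le> 1/4 * a (k - 1) + M / D * (\<phi> (p k) - \<phi> (p (Suc k)))
      \<and> \<phi> (p (Suc k)) \<le> \<phi> (p k)" if "k \<ge> N" for k
  proof -
    note K = key[OF that]
    have Da: "D * (a k)^2 > 0" using H2_D a0[of k] by simp
    have pk: "p k > 0" using K Da p0[of "Suc k"] by linarith
    have dpos: "\<phi>' (p k) > 0" using H3_pos pk K by auto
    have tan: "\<phi> (p k) - \<phi> (p (Suc k)) \<ge> \<phi>' (p k) * (p k - p (Suc k))"
      by (rule tangent_concave[OF H3_deriv H3_concave pk]) (use K p0 in auto)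
    define \<Delta> where "\<Delta> = \<phi> (p k) - \<phi> (p (Suc k))"
    define b where "b = C1 * a k + C2 * a (k - 1)"
    have b: "\<phi>' (p k) * b \<ge> 1" using K unfolding b_def by simp
    have bpos: "b > 0" using b dpos by (smt (verit) mult_nonpos_nonneg mult_nonneg_nonpos)
    have "\<Delta> \<ge> \<phi>' (p k) * (D * (a k)^2)"
      using tan K dpos unfolding \<Delta>_def by (smt (verit) mult_left_mono)
    hence D1: "b * \<Delta> \<ge> (\<phi>' (p k) * b) * (D * (a k)^2)" using bpos
      by (smt (verit) mult.assoc mult.commute mult_left_mono)
    have D2: "(\<phi>' (p k) * b) * (D * (a k)^2) \<ge> D * (a k)^2" using mult_right_mono[OF b less_imp_le[OF Da]] by simp
    have \<Delta>0: "\<Delta> \<ge> 0" using D1 D2 Da bpos by (smt (verit) mult_pos_neg)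
    have bM: "b \<le> M * (a k + a (k - 1))"
      unfolding b_def M_def using a0[of k] a0[of "k-1"] H3_C
      by (smt (verit) distrib_left max.cobounded1 max.cobounded2 mult_right_mono)
    have "D * (a k)^2 \<le> b * \<Delta>" using D1 D2 by linarith
    also have "\<dots> \<le> M * (a k + a (k - 1)) * \<Delta>" using bM \<Delta>0 by (rule mult_right_mono)
    finally have sq: "(a k)^2 \<le> (a k + a (k - 1)) * (M / D * \<Delta>)"
      using H2_D by (simp add: field_simps)
    have v0: "0 \<le> M / D * \<Delta>" using M H2_D \<Delta>0 by simp
    have "3/4 * a k \<le> 1/4 * a (k - 1) + M / D * \<Delta>"
      by (rule amgm_step[OF less_imp_le[OF a0[of k]] less_imp_le[OF a0[of "k - 1"]] v0 sq])
    thus ?thesis using \<Delta>0 unfolding \<Delta>_def by simp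
  qed
  have ev: "\<forall>\<^sub>F k in sequentially.
            3/4 * norm (x k - x (Suc k)) \<le> 1/4 * norm (x (k - 1) - x k)
              + max C1 C2 / D * (\<phi> (real_of_ereal (\<Psi> (x k))) - \<phi> (real_of_ereal (\<Psi> (x (Suc k)))))"
    unfolding eventually_sequentially
  proof (intro exI[of _ N] allI impI)
    fix k assume kN: "N \<le> k"
    hence sk: "Suc (k - 1) = k" unfolding N_def by simp
    from ineq[OF kN] show "3/4 * norm (x k - x (Suc k)) \<le> 1/4 * norm (x (k - 1) - x k)
              + max C1 C2 / D * (\<phi> (real_of_ereal (\<Psi> (x k))) - \<phi> (real_of_ereal (\<Psi> (x (Suc k)))))"
      unfolding a_def p_def M_def sk by simp
  qed
  define c where "c = M / D"
  have c0: "c > 0" using M H2_D unfolding c_def by simp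
  define f where "f k = \<phi> (p k)" for k
  have f0: "f k \<ge> 0" if "k \<ge> N" for k
    using H3_nonneg key[OF that] p0[of k] unfolding f_def by simp
  have inv: "(\<Sum>i<n. a (i + N)) / 2 + a (n + N - 1) / 4 \<le> a (N - 1) / 4 + c * (f N - f (n + N))"
    for n
  proof (induction n)
    case 0 then show ?case by simp
  next
    case (Suc n)
    have "n + N \<ge> N" by simp
    from ineq[OF this] have "3/4 * a (n+N) \<le> 1/4 * a (n + N - 1) + c * (f (n+N) - f (Suc (n+N)))"
      unfolding c_def f_def by simp
    moreover have "Suc n + N - 1 = n + N" unfolding N_def by simp
    ultimately have st: "3/4 * a (n+N) \<le> 1/4 * a (n + N - 1) + c * f (n+N) - c * f (Suc n + N)"
      by (simp add: right_diff_distrib)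
    have sm: "(\<Sum>i<Suc n. a (i + N)) = (\<Sum>i<n. a (i + N)) + a (n + N)" by simp
    have e: "Suc n + N - 1 = n + N" unfolding N_def by simp
    have e2: "n + N - 1 = n + N0" "N - 1 = N0" unfolding N_def by simp_all
    have aux: "\<And>A B C D E F S :: real. 3/4 * A \<le> 1/4 * B + C - D \<Longrightarrow>
        S / 2 + B / 4 \<le> E / 4 + (F - C) \<Longrightarrow> (S + A) / 2 + A / 4 \<le> E / 4 + (F - D)"
      by (simp add: field_simps)
    show ?case using st Suc.IH unfolding sm e e2 right_diff_distrib by (rule aux)
  qed
  have "summable (\<lambda>i. a (i + N))"
  proof (rule summableI_nonneg_bounded)
    show "0 \<le> a (i + N)" for i using a0[of "i+N"] by simp
    show "(\<Sum>i<n. a (i + N)) \<le> 2 * (a (N - 1) / 4 + c * f N)" for n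
    proof -
      have "f (n + N) \<ge> 0" by (rule f0) (simp add: N_def)
      moreover have "a (n + N - 1) \<ge> 0" using less_imp_le[OF a0] .
      ultimately have cf: "c * f (n + N) \<ge> 0" "a (n + N - 1) \<ge> 0" using c0 by simp_all
      have aux: "\<And>S B E F G :: real. S / 2 + B / 4 \<le> E / 4 + (F - G) \<Longrightarrow> 0 \<le> G \<Longrightarrow> 0 \<le> B
         \<Longrightarrow> S \<le> 2 * (E / 4 + F)" by (simp add: field_simps)
      show ?thesis using inv[of n] cf unfolding right_diff_distrib by (rule aux)
    qed
  qed
  hence sa: "summable a" by (rule summable_iff_shift[THEN iffD1])
  have "summable (\<lambda>k. x k - x (Suc k))"
    using sa unfolding a_def by (rule summable_norm_cancel)
  then obtain L where L: "(\<lambda>n. \<Sum>k<n. x k - x (Suc k)) \<longlonglongrightarrow> L"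
    using summable_LIMSEQ by blast
  have "(\<lambda>n. x 0 - (\<Sum>k<n. x k - x (Suc k))) \<longlonglongrightarrow> x 0 - L"
    by (intro tendsto_intros L)
  hence "x \<longlonglongrightarrow> x 0 - L" by (simp add: sum_lessThan_telescope')
  hence "convergent x" by (rule convergentI)
  with ev sa show ?thesis unfolding a_def by blast
qed

end
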